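(* Let $q$ be a prime power, let $1\le k\le m$ be integers, and let $C\subseteq \mathbb{F}_{q^m}^k$ be a non-zero $\mathbb{F}_{q^m}$-linear code of dimension $1\le t\le k$ over $\mathbb{F}_{q^m}$. For any integer $1\le r\le t$ we have $$m_r(C)=\min\{\dim_{\mathbb{F}_{q^m}}(A) : A\in \mathcal{A}^G_q(k,m),\ \dim_{\mathbb{F}_{q^m}}(A\cap C)\ge r\}.$$
   Context: For $v\in\mathbb{F}_{q^m}^k$, $\mathrm{rk}(v):=\dim_{\mathbb{F}_q}\mathrm{Span}_{\mathbb{F}_q}\{v_1,\dots,v_k\}$, and for a subspace $C$, $\mathrm{maxrk}(C):=\max\{\mathrm{rk}(c):c\in C\}$. $\mathcal{A}^G_q(k,m)$ is the set of $\mathbb{F}_{q^m}$-subspaces $A\subseteq\mathbb{F}_{q^m}^k$ with $\dim_{\mathbb{F}_{q^m}}(A)=\mathrm{maxrk}(A)$. A subspace $V\subseteq\mathbb{F}_{q^m}^k$ is Frobenius-closed if $(v_1^q,\dots,v_k^q)\in V$ whenever $v\in V$; $\Lambda_q(k,m)$ is the set of such subspaces. The $r$-th generalized rank weight is $m_r(C):=\min\{\dim_{\mathbb{F}_{q^m}}(V): V\in\Lambda_q(k,m),\ \dim_{\mathbb{F}_{q^m}}(V\cap C)\ge r\}$. *)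

theory Defs
  imports Complex_Main "HOL-Library.Function_Algebras" "HOL-Library.Cardinality" "HOL-Computational_Algebra.Primes"
begin

text \<open>Ambient field F_{q^m} is a finite field type 'a with CARD('a) = q^m.
  Vectors of F_{q^m}^k are functions 'n => 'a with CARD('n) = k.\<close>

definition vsc :: "'a::field \<Rightarrow> ('n \<Rightarrow> 'a) \<Rightarrow> ('n \<Rightarrow> 'a)" where
  "vsc c v = (\<lambda>i. c * v i)"

abbreviation vsubspace :: "('n \<Rightarrow> 'a::field) set \<Rightarrow> bool" where
  "vsubspace V \<equiv> module.subspace vsc V"

abbreviation vdim :: "('n \<Rightarrow> 'a::field) set \<Rightarrow> nat" where
  "vdim V \<equiv> vector_space.dim vsc V"

text \<open>The subfield F_q of F_{q^m}: the fixed points of x |-> x^q.\<close>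
definition Fsub :: "nat \<Rightarrow> 'a::field set" where
  "Fsub q = {x. x ^ q = x}"

definition span_over :: "'a::field set \<Rightarrow> 'a set \<Rightarrow> 'a set" where
  "span_over K S = {x. \<exists>F c. finite F \<and> F \<subseteq> S \<and> (\<forall>a\<in>F. c a \<in> K) \<and> x = (\<Sum>a\<in>F. c a * a)}"

definition dim_over :: "'a::field set \<Rightarrow> 'a set \<Rightarrow> nat" where
  "dim_over K V = (LEAST n. \<exists>B. finite B \<and> card B = n \<and> B \<subseteq> V \<and> span_over K B = V)"

definition rk :: "nat \<Rightarrow> ('n \<Rightarrow> 'a::field) \<Rightarrow> nat" where
  "rk q v = dim_over (Fsub q) (span_over (Fsub q) (range v))"

definition maxrk :: "nat \<Rightarrow> ('n::finite \<Rightarrow> 'a::{field,finite}) set \<Rightarrow> nat" where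
  "maxrk q C = Max (rk q ` C)"

definition AG :: "nat \<Rightarrow> ('n::finite \<Rightarrow> 'a::{field,finite}) set set" where
  "AG q = {A. vsubspace A \<and> vdim A = maxrk q A}"

definition frob_vec :: "nat \<Rightarrow> ('n \<Rightarrow> 'a::field) \<Rightarrow> ('n \<Rightarrow> 'a)" where
  "frob_vec q v = (\<lambda>i. v i ^ q)"

definition Lam :: "nat \<Rightarrow> ('n::finite \<Rightarrow> 'a::{field,finite}) set set" where
  "Lam q = {V. vsubspace V \<and> (\<forall>v\<in>V. frob_vec q v \<in> V)}"

definition gen_rank_weight :: "nat \<Rightarrow> ('n::finite \<Rightarrow> 'a::{field,finite}) set \<Rightarrow> nat \<Rightarrow> nat" where
  "gen_rank_weight q C r = Min {vdim V | V. V \<in> Lam q \<and> vdim (V \<inter> C) \<ge> r}"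

end

theory Submission
  imports Defs "HOL-Number_Theory.Residues" "HOL-Algebra.Embedded_Algebras" "HOL-Computational_Algebra.Polynomial"
begin

definition FR :: "'a::field ring" where
  "FR = \<lparr>carrier = UNIV, mult = (*), one = 1, zero = 0, add = (+)\<rparr>"

lemma FR_simps [simp]: "carrier FR = UNIV" "x \<otimes>\<^bsub>FR\<^esub> y = x * y" "x \<oplus>\<^bsub>FR\<^esub> y = x + y"
  "\<one>\<^bsub>FR\<^esub> = 1" "\<zero>\<^bsub>FR\<^esub> = 0"
  by (simp_all add: FR_def)

lemma field_FR: "field (FR :: 'a::field ring)"
proof -
  have "\<exists>y. x + y = 0" for x :: 'a
    using add.right_inverse by blast
  moreover have "x \<noteq> 0 \<Longrightarrow> \<exists>y. x * y = 1" for x :: 'a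
    by (rule exI[of _ "inverse x"]) auto
  ultimately show ?thesis
    unfolding FR_def using add.right_inverse
    by unfold_locales (auto simp: algebra_simps Units_def)
qed

lemma FR_ainv [simp]: "\<ominus>\<^bsub>FR\<^esub> (x::'a::field) = - x"
proof -
  interpret field FR by (rule field_FR)
  show ?thesis by (rule minus_equality) auto
qed

lemma FR_minv: "(x::'a::field) \<noteq> 0 \<Longrightarrow> inv\<^bsub>FR\<^esub> x = inverse x"
proof -
  interpret field FR by (rule field_FR)
  assume x: "x \<noteq> 0"
  have "x \<in> Units FR" using x field_Units by auto
  thus ?thesis using x by (intro inv_char) auto
qed


lemma vs_vector_space: "vector_space (vsc :: 'a::field \<Rightarrow> ('n \<Rightarrow> 'a) \<Rightarrow> ('n \<Rightarrow> 'a))"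
  by unfold_locales (auto simp: vsc_def fun_eq_iff algebra_simps)

interpretation vs: vector_space "vsc :: 'a::field \<Rightarrow> ('n \<Rightarrow> 'a) \<Rightarrow> ('n \<Rightarrow> 'a)"
  by (rule vs_vector_space)

definition vsB :: "('n::finite \<Rightarrow> 'a::{field,finite}) set" where
  "vsB = (SOME B. vs.independent B \<and> UNIV \<subseteq> vs.span B)"

lemma vsB: "vs.independent (vsB :: ('n::finite \<Rightarrow> 'a::{field,finite}) set) \<and> UNIV \<subseteq> vs.span (vsB :: ('n \<Rightarrow> 'a) set)"
proof -
  obtain B :: "('n \<Rightarrow> 'a) set" where "vs.independent B" "UNIV \<subseteq> vs.span B"
    using vs.basis_exists[of UNIV] by blast
  thus ?thesis unfolding vsB_def by (rule someI[where P="\<lambda>B. vs.independent B \<and> UNIV \<subseteq> vs.span B", OF conjI])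
qed

interpretation fvs: finite_dimensional_vector_space "vsc :: 'a::{field,finite} \<Rightarrow> ('n::finite \<Rightarrow> 'a) \<Rightarrow> ('n \<Rightarrow> 'a)" vsB
  by unfold_locales (use vsB in auto)

lemma sum_fun_app: "(sum f A) x = sum (\<lambda>a. f a x) A"
  by (induction A rule: infinite_finite_induct) auto

lemma vsc_app [simp]: "vsc c v i = c * v i" by (simp add: vsc_def)


locale ffq =
  fixes q p e m :: nat and K :: "'a::{field,finite} set"
  assumes p_prime: "prime p" and e_pos: "0 < e" and q_def: "q = p ^ e"
    and card_F: "CARD('a) = q ^ m" and m_pos: "0 < m" and K_def: "K = Fsub q"
begin

lemma q_ge2: "2 \<le> q"
proof -
  have "2 \<le> p" using p_prime prime_ge_2_nat by blast
  moreover have "p \<le> p ^ e" using e_pos \<open>2 \<le> p\<close> by (simp add: self_le_power)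
  ultimately show ?thesis using q_def by simp
qed

lemma CHAR_eq: "CHAR('a) = p"
proof -
  have pos: "CHAR('a) > 0" by (rule finite_imp_CHAR_pos) simp
  have pr: "prime CHAR('a)" using prime_CHAR_semidom[OF pos] .
  have "CHAR('a) dvd p ^ (e * m)" using CHAR_dvd_CARD[where 'a='a] card_F q_def
    by (simp add: power_mult)
  hence "CHAR('a) dvd p" using pr prime_dvd_power by blast
  thus ?thesis using pr p_prime by (simp add: primes_dvd_imp_eq)
qed

lemma frob_add: "((x::'a) + y) ^ q = x ^ q + y ^ q"
  using freshmans_dream'[of q e x y] CHAR_eq p_prime q_def by simp

lemma frob_sum: "(sum (f :: _ \<Rightarrow> 'a) A) ^ q = sum (\<lambda>i. f i ^ q) A"
  using freshmans_dream_sum'[of q e f A] CHAR_eq p_prime q_def by simp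

lemma frob_neg: "(- (x::'a)) ^ q = - (x ^ q)"
proof -
  have "(x + - x) ^ q = x ^ q + (- x) ^ q" by (rule frob_add)
  moreover have "(0::'a) ^ q = 0" using q_ge2 by simp
  ultimately show ?thesis by (simp add: eq_neg_iff_add_eq_0 add.commute)
qed

lemma frob_diff: "((x::'a) - y) ^ q = x ^ q - y ^ q"
  using frob_add[of x "-y"] frob_neg[of y] by simp

lemma frob_inj: "(x::'a) ^ q = y ^ q \<Longrightarrow> x = y"
  using frob_diff[of x y] q_ge2 by simp

lemma K_iff: "c \<in> K \<longleftrightarrow> c ^ q = c" by (simp add: K_def Fsub_def)

lemma K_0: "0 \<in> K" using q_ge2 by (simp add: K_iff)
lemma K_1: "1 \<in> K" by (simp add: K_iff)
lemma K_add: "a \<in> K \<Longrightarrow> b \<in> K \<Longrightarrow> a + b \<in> K" by (simp add: K_iff frob_add)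
lemma K_neg: "a \<in> K \<Longrightarrow> - a \<in> K" by (simp add: K_iff frob_neg)
lemma K_diff: "a \<in> K \<Longrightarrow> b \<in> K \<Longrightarrow> a - b \<in> K" by (simp add: K_iff frob_diff)
lemma K_mult: "a \<in> K \<Longrightarrow> b \<in> K \<Longrightarrow> a * b \<in> K" by (simp add: K_iff power_mult_distrib)
lemma K_inverse: "a \<in> K \<Longrightarrow> inverse a \<in> K" by (simp add: K_iff power_inverse)
lemma K_pow: "a \<in> K \<Longrightarrow> a ^ (q ^ l) = a"
proof (induction l)
  case 0 then show ?case by simp
next
  case (Suc l)
  have "a ^ (q ^ Suc l) = (a ^ q) ^ (q ^ l)" by (simp add: power_mult mult.commute)
  then show ?case using Suc K_iff by simp
qed

lemma pow_card_same: "(x::'a) ^ CARD('a) = x"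
proof (cases "x = 0")
  case False
  have "x * (\<Prod>y\<in>UNIV-{0}. x * y) = x * x ^ (CARD('a) - 1) * \<Prod>(UNIV-{0::'a})"
    by (simp add: prod.distrib mult_ac)
  also have "x * x ^ (CARD('a) - 1) = x ^ Suc (CARD('a) - 1)"
    by (subst power_Suc) auto
  also have "Suc (CARD('a) - 1) = CARD('a)"
    using finite_UNIV_card_ge_0[where ?'a = 'a] by simp
  also have "(\<Prod>y\<in>UNIV-{0}. x * y) = (\<Prod>y\<in>UNIV-{0::'a}. y)"
    by (rule prod.reindex_bij_witness[of _ "\<lambda>y. y / x" "\<lambda>y. x * y"]) (use False in auto)
  finally show ?thesis
    by simp
qed (use finite_UNIV_card_ge_0[where ?'a = 'a] in auto)

lemma pow_N: "(x::'a) \<noteq> 0 \<Longrightarrow> x ^ (CARD('a) - 1) = 1"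
proof -
  assume x: "x \<noteq> 0"
  have "x * x ^ (CARD('a) - 1) = x ^ CARD('a)"
    using finite_UNIV_card_ge_0[where ?'a = 'a] by (cases "CARD('a)") auto
  hence "x * x ^ (CARD('a) - 1) = x * 1" using pow_card_same by simp
  thus ?thesis using x by simp
qed

lemma card_K_le: "card K \<le> q"
proof -
  define P :: "'a poly" where "P = monom 1 q + [:0,-1:]"
  have evalP: "poly P x = x ^ q - x" for x by (simp add: P_def poly_monom)
  have degP: "degree P = q" unfolding P_def using q_ge2
    by (subst degree_add_eq_left) (auto simp: degree_monom_eq)
  have "P \<noteq> 0" using degP q_ge2 by auto
  have "K \<subseteq> {x. poly P x = 0}" by (auto simp: evalP K_iff)
  hence "card K \<le> card {x. poly P x = 0}" by (intro card_mono) auto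
  also have "\<dots> \<le> degree P" by (rule card_poly_roots_bound[OF \<open>P \<noteq> 0\<close>])
  finally show ?thesis using degP by simp
qed

lemma card_K_ge: "q \<le> card K"
proof -
  define T where "T = (\<Sum>i<m. q ^ i)"
  have "int (q ^ m) - 1 = (int q - 1) * (\<Sum>i<m. int q ^ i)"
    using power_diff_1_eq[of "int q" m] by simp
  hence NT0: "int (q ^ m - 1) = int ((q - 1) * T)"
    using q_ge2 by (simp add: T_def of_nat_diff)
  hence NT: "q ^ m - 1 = (q - 1) * T" by linarith
  have "1 \<le> q ^ m - 1"
  proof -
    have "q ^ 1 \<le> q ^ m" using m_pos q_ge2 by (intro power_increasing) auto
    thus ?thesis using q_ge2 by simp
  qed
  hence T1: "1 \<le> T" using NT by (cases T) auto
  define H :: "'a poly" where "H = (\<Sum>j<T. monom 1 ((q - 1) * j))"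
  have evalH: "poly H x = (\<Sum>j<T. (x ^ (q - 1)) ^ j)" for x
    by (simp add: H_def poly_sum poly_monom power_mult)
  have "coeff H 0 = 1"
  proof -
    have "coeff H 0 = (\<Sum>j<T. if (q - 1) * j = 0 then 1 else 0)"
      by (simp add: H_def coeff_sum)
    also have "\<dots> = (\<Sum>j<T. if j = 0 then 1 else 0)"
      using q_ge2 by (intro sum.cong) auto
    also have "\<dots> = 1" using T1 by (simp add: sum.delta)
    finally show ?thesis .
  qed
  hence "H \<noteq> 0" by auto
  have degH: "degree H \<le> (q - 1) * (T - 1)"
    unfolding H_def
    by (rule degree_sum_le) (auto simp: degree_monom_eq intro: order.trans[OF degree_monom_le])
  have sub: "UNIV - {0} \<subseteq> (K - {0}) \<union> {x. poly H x = 0}"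
  proof
    fix x :: 'a assume "x \<in> UNIV - {0}"
    hence x: "x \<noteq> 0" by simp
    show "x \<in> (K - {0}) \<union> {x. poly H x = 0}"
    proof (cases "x \<in> K")
      case False
      define y where "y = x ^ (q - 1)"
      have "x ^ q = x * y" using q_ge2 by (simp add: y_def power_Suc[symmetric])
      hence y1: "y \<noteq> 1" using False by (auto simp: K_iff)
      have "y ^ T = x ^ (CARD('a) - 1)" by (simp only: y_def power_mult[symmetric] card_F NT)
      hence "y ^ T = 1" using pow_N[OF x] by simp
      hence "(y - 1) * (\<Sum>i<T. y ^ i) = 0" using power_diff_1_eq[of y T] by simp
      hence "poly H x = 0" using y1 by (simp add: evalH y_def)
      thus ?thesis by simp
    qed (use x in auto)
  qed
  have c1: "card (UNIV - {0::'a}) = q ^ m - 1" by (simp add: card_F)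
  have c2: "card (UNIV - {0::'a}) \<le> card ((K - {0}) \<union> {x. poly H x = 0})"
    using sub by (intro card_mono) auto
  have c3: "card ((K - {0}) \<union> {x. poly H x = 0}) \<le> card (K - {0}) + card {x. poly H x = 0}"
    by (rule card_Un_le)
  have c4: "card {x. poly H x = 0} \<le> degree H" by (rule card_poly_roots_bound[OF \<open>H \<noteq> 0\<close>])
  have c5: "card (K - {0}) = card K - 1" using K_0 by simp
  have "(q - 1) * T \<le> card K - 1 + (q - 1) * (T - 1)" using c1 c2 c3 c4 c5 NT degH by linarith
  moreover have "(q - 1) * T = (q - 1) * (T - 1) + (q - 1)" using T1
    by (metis add.commute le_add_diff_inverse mult.right_neutral distrib_left)
  ultimately have "q - 1 \<le> card K - 1" by linarith
  moreover have "1 \<le> card K" using K_0 by (metis card_0_eq empty_iff finite less_one not_le)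
  ultimately show ?thesis using q_ge2 by linarith
qed

lemma card_K: "card K = q" using card_K_le card_K_ge by simp

lemma subfield_K: "subfield K FR"
proof -
  interpret field FR by (rule field_FR)
  show ?thesis
  proof (rule subfieldI')
    show "subring K FR"
      by (rule subringI) (auto simp: K_1 K_neg K_mult K_add)
    show "inv\<^bsub>FR\<^esub> k \<in> K" if "k \<in> K - {\<zero>\<^bsub>FR\<^esub>}" for k
      using that FR_minv[of k] K_inverse by auto
  qed
qed

end

sublocale ffq \<subseteq> EA: embedded_algebra K "FR :: 'a ring"
proof -
  interpret field FR by (rule field_FR)
  show "embedded_algebra K (FR :: 'a ring)"
    by (intro embedded_algebra.intro subfield_K) unfold_locales
qed

context ffq begin

lemma combine_eq: "length Ks = length Us \<Longrightarrow> EA.combine Ks Us = (\<Sum>j<length Us. Ks ! j * Us ! j)"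
proof (induction Us arbitrary: Ks)
  case Nil then show ?case by simp
next
  case (Cons u Us)
  then obtain k Ks' where Ks: "Ks = k # Ks'" by (cases Ks) auto
  show ?case using Cons Ks by (simp del: sum.lessThan_Suc add: sum.lessThan_Suc_shift)
qed

lemma sum_distinct_nth: "distinct xs \<Longrightarrow> (\<Sum>a\<in>set xs. f a) = (\<Sum>j<length xs. f (xs ! j))"
  by (simp add: sum.distinct_set_conv_list sum_list_sum_nth atLeast0LessThan)

lemma Span_iff: "a \<in> EA.Span K Us \<longleftrightarrow> (\<exists>Ks. set Ks \<subseteq> K \<and> length Ks = length Us \<and> a = (\<Sum>j<length Us. Ks ! j * Us ! j))"
proof -
  have "a \<in> EA.Span K Us \<longleftrightarrow> (\<exists>Ks. set Ks \<subseteq> K \<and> length Ks = length Us \<and> a = EA.combine Ks Us)"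
    by (rule EA.Span_mem_iff_length_version[OF subfield_K]) simp
  also have "\<dots> \<longleftrightarrow> (\<exists>Ks. set Ks \<subseteq> K \<and> length Ks = length Us \<and> a = (\<Sum>j<length Us. Ks ! j * Us ! j))"
    using combine_eq by (intro ex_cong1) auto
  finally show ?thesis .
qed

lemma span_over_fin: assumes S: "finite S" shows "span_over K S = {y. \<exists>c. (\<forall>a\<in>S. c a \<in> K) \<and> y = (\<Sum>a\<in>S. c a * a)}"
proof (intro Set.set_eqI iffI)
  fix y assume "y \<in> span_over K S"
  then obtain F c where F: "finite F" "F \<subseteq> S" "\<forall>a\<in>F. c a \<in> K" "y = (\<Sum>a\<in>F. c a * a)"
    unfolding span_over_def by blast
  define c' where "c' a = (if a \<in> F then c a else 0)" for a
  have "(\<Sum>a\<in>S. c' a * a) = (\<Sum>a\<in>F. c' a * a)"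
    using F S by (intro sum.mono_neutral_right) (auto simp: c'_def)
  also have "\<dots> = y" using F by (simp add: c'_def)
  finally have "y = (\<Sum>a\<in>S. c' a * a)" by simp
  moreover have "\<forall>a\<in>S. c' a \<in> K" using F(3) K_0 by (simp add: c'_def)
  ultimately show "y \<in> {y. \<exists>c. (\<forall>a\<in>S. c a \<in> K) \<and> y = (\<Sum>a\<in>S. c a * a)}"
    by blast
next
  fix y assume "y \<in> {y. \<exists>c. (\<forall>a\<in>S. c a \<in> K) \<and> y = (\<Sum>a\<in>S. c a * a)}"
  then show "y \<in> span_over K S" unfolding span_over_def using S by blast
qed

lemma span_list: assumes d: "distinct Us" shows "span_over K (set Us) = EA.Span K Us"
proof (intro Set.set_eqI iffI)
  fix y assume "y \<in> span_over K (set Us)"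
  then obtain c where c: "\<forall>a\<in>set Us. c a \<in> K" "y = (\<Sum>a\<in>set Us. c a * a)"
    by (auto simp: span_over_fin)
  have "y = (\<Sum>j<length Us. map c Us ! j * Us ! j)"
    using c d by (simp add: sum_distinct_nth)
  moreover have "set (map c Us) \<subseteq> K" using c by auto
  ultimately show "y \<in> EA.Span K Us" unfolding Span_iff by (intro exI[of _ "map c Us"]) auto
next
  fix y assume "y \<in> EA.Span K Us"
  then obtain Ks where Ks: "set Ks \<subseteq> K" "length Ks = length Us" "y = (\<Sum>j<length Us. Ks ! j * Us ! j)"
    unfolding Span_iff by blast
  define idx where "idx a = (SOME j. j < length Us \<and> Us ! j = a)" for a
  have idx: "idx (Us ! j) = j" if "j < length Us" for j
  proof -
    have "idx (Us ! j) < length Us \<and> Us ! idx (Us ! j) = Us ! j"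
      unfolding idx_def by (rule someI[of _ j]) (use that in auto)
    thus ?thesis using d that nth_eq_iff_index_eq by blast
  qed
  define c where "c a = Ks ! idx a" for a
  have "(\<Sum>a\<in>set Us. c a * a) = (\<Sum>j<length Us. c (Us ! j) * Us ! j)"
    using d by (simp add: sum_distinct_nth)
  also have "\<dots> = y" using Ks idx by (simp add: c_def)
  finally have "y = (\<Sum>a\<in>set Us. c a * a)" by simp
  moreover have "\<forall>a\<in>set Us. c a \<in> K"
  proof
    fix a assume "a \<in> set Us"
    then obtain i where i: "i < length Us" "a = Us ! i" by (auto simp: in_set_conv_nth)
    hence "c a = Ks ! i" using idx by (simp add: c_def)
    moreover have "Ks ! i \<in> set Ks" using i Ks(2) by simp
    ultimately show "c a \<in> K" using Ks(1) by auto
  qed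
  ultimately show "y \<in> span_over K (set Us)" using span_over_fin by auto
qed

lemma basis_sub: "\<exists>Ws. EA.independent K Ws \<and> set Ws \<subseteq> set Bs \<and> EA.Span K Ws = EA.Span K Bs"
proof (induction Bs)
  case Nil then show ?case by (intro exI[of _ "[]"]) auto
next
  case (Cons b Bs)
  then obtain Ws where Ws: "EA.independent K Ws" "set Ws \<subseteq> set Bs" "EA.Span K Ws = EA.Span K Bs"
    by blast
  show ?case
  proof (cases "b \<in> EA.Span K Ws")
    case True
    have "EA.Span K (b # Bs) \<subseteq> EA.Span K Bs"
      using True Ws EA.Span_base_incl[OF subfield_K, of Bs] by (intro EA.mono_Span_subset[OF subfield_K]) auto
    moreover have "EA.Span K Bs \<subseteq> EA.Span K (b # Bs)" by (intro EA.mono_Span[OF subfield_K]) auto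
    ultimately show ?thesis using Ws by (intro exI[of _ Ws]) auto
  next
    case False
    have "EA.independent K (b # Ws)" using False Ws by (intro EA.li_Cons) auto
    thus ?thesis using Ws by (intro exI[of _ "b # Ws"]) auto
  qed
qed

lemma dim_over_eq:
  assumes ind: "EA.independent K Us" and E: "EA.Span K Us = E"
  shows "dim_over K E = length Us"
  unfolding dim_over_def
proof (rule Least_equality)
  have d: "distinct Us" using EA.independent_distinct[OF subfield_K ind] .
  show "\<exists>B. finite B \<and> card B = length Us \<and> B \<subseteq> E \<and> span_over K B = E"
    using d E span_list[OF d] EA.Span_base_incl[OF subfield_K, of Us]
    by (intro exI[of _ "set Us"]) (auto simp: distinct_card)
next
  fix n assume "\<exists>B. finite B \<and> card B = n \<and> B \<subseteq> E \<and> span_over K B = E"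
  then obtain B where B: "finite B" "card B = n" "span_over K B = E" by blast
  obtain Bs where Bs: "set Bs = B" "distinct Bs" using finite_distinct_list[OF B(1)] by blast
  obtain Ws where Ws: "EA.independent K Ws" "set Ws \<subseteq> set Bs" "EA.Span K Ws = EA.Span K Bs"
    using basis_sub by blast
  have "EA.Span K Bs = E" using span_list[OF Bs(2)] Bs B by simp
  hence "length Us \<le> length Ws"
    using Ws ind E EA.Span_base_incl[OF subfield_K, of Us] by (intro EA.independent_length_le[OF subfield_K]) auto
  also have "length Ws = card (set Ws)" using EA.independent_distinct[OF subfield_K Ws(1)] by (simp add: distinct_card)
  also have "\<dots> \<le> card B" using Ws Bs B by (intro card_mono) auto
  finally show "length Us \<le> n" using B by simp
qed

lemma rk_basis: "\<exists>Ws. EA.independent K Ws \<and> set Ws \<subseteq> range v \<and>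
   EA.Span K Ws = span_over K (range v) \<and> rk q (v :: 'n::finite \<Rightarrow> 'a) = length Ws"
proof -
  obtain Bs where Bs: "set Bs = range v" "distinct Bs" using finite_distinct_list[of "range v"] by auto
  obtain Ws where Ws: "EA.independent K Ws" "set Ws \<subseteq> set Bs" "EA.Span K Ws = EA.Span K Bs"
    using basis_sub by blast
  have sp: "EA.Span K Ws = span_over K (range v)" using Ws span_list[OF Bs(2)] Bs by simp
  have "rk q v = length Ws" unfolding rk_def K_def[symmetric] using dim_over_eq[OF Ws(1) sp] .
  thus ?thesis using Ws sp Bs by auto
qed

lemma rk_ge: assumes "EA.independent K Us" "set Us \<subseteq> span_over K (range (v :: 'n::finite \<Rightarrow> 'a))"
  shows "length Us \<le> rk q v"
proof -
  obtain Ws where Ws: "EA.independent K Ws" "EA.Span K Ws = span_over K (range v)" "rk q v = length Ws"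
    using rk_basis by blast
  show ?thesis using EA.independent_length_le[OF subfield_K assms(1) Ws(1)] assms Ws by simp
qed

lemma combine_gen: "EA.combine Ks Us = (\<Sum>j<min (length Ks) (length Us). Ks ! j * Us ! j)"
proof (induction Us arbitrary: Ks)
  case Nil then show ?case by simp
next
  case (Cons u Us)
  show ?case
  proof (cases Ks)
    case Nil then show ?thesis by simp
  next
    case (Cons k Ks')
    then show ?thesis using Cons.IH[of Ks']
      by (simp del: sum.lessThan_Suc add: sum.lessThan_Suc_shift)
  qed
qed

lemma indep_unique:
  assumes ind: "EA.independent K Ws" and As: "set As \<subseteq> K" "length As = length Ws"
    and Bs: "set Bs \<subseteq> K" "length Bs = length Ws"
    and eq: "(\<Sum>j<length Ws. As ! j * Ws ! j) = (\<Sum>j<length Ws. Bs ! j * Ws ! j)"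
  shows "As = Bs"
proof -
  define a where "a = (\<Sum>j<length Ws. As ! j * Ws ! j)"
  have "a \<in> EA.Span K Ws" unfolding Span_iff a_def using As by blast
  from EA.unique_decomposition[OF subfield_K ind this]
  have "\<exists>!Ks. set Ks \<subseteq> K \<and> length Ks = length Ws \<and> a = EA.combine Ks Ws" .
  moreover have "a = EA.combine As Ws" using As combine_eq a_def by simp
  moreover have "a = EA.combine Bs Ws" using Bs combine_eq a_def eq by simp
  ultimately show ?thesis using As Bs by blast
qed

lemma indep_zero:
  assumes ind: "EA.independent K Ws" and As: "set As \<subseteq> K" "length As = length Ws"
    and eq: "(\<Sum>j<length Ws. As ! j * Ws ! j) = 0"
  shows "As = replicate (length Ws) 0"
proof -
  have "set (replicate (length Ws) (0::'a)) \<subseteq> K" using K_0 by (auto simp: set_replicate_conv_if)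
  thus ?thesis using indep_unique[OF ind As, of "replicate (length Ws) 0"] eq by simp
qed

lemma indep_crit:
  assumes crit: "\<And>As. set As \<subseteq> K \<Longrightarrow> length As = length Us \<Longrightarrow> (\<Sum>j<length Us. As ! j * Us ! j) = 0 \<Longrightarrow> set As \<subseteq> {0}"
  shows "EA.independent K Us"
proof (rule EA.trivial_combine_imp_independent[OF subfield_K])
  show "set Us \<subseteq> carrier FR" by simp
  fix Ks assume Ks: "set Ks \<subseteq> K" and c0: "EA.combine Ks Us = \<zero>\<^bsub>FR\<^esub>"
  define n where "n = length Us"
  define As where "As = take n Ks @ replicate (n - length Ks) 0"
  have lenA: "length As = n" by (simp add: As_def)
  have setA: "set As \<subseteq> K" using Ks K_0 by (auto simp: As_def dest: in_set_takeD)
  have Anth: "As ! j = (if j < length Ks then Ks ! j else 0)" if "j < n" for j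
    using that by (auto simp: As_def nth_append)
  have "(\<Sum>j<n. As ! j * Us ! j) = (\<Sum>j<n. if j < length Ks then Ks ! j * Us ! j else 0)"
    using Anth by (intro sum.cong) auto
  also have "\<dots> = (\<Sum>j\<in>{..<n} \<inter> {j. j < length Ks}. Ks ! j * Us ! j)"
    by (simp add: sum.inter_restrict)
  also have "{..<n} \<inter> {j. j < length Ks} = {..<min (length Ks) (length Us)}"
    by (auto simp: n_def)
  also have "(\<Sum>j<min (length Ks) (length Us). Ks ! j * Us ! j) = 0"
    using c0 combine_gen by simp
  finally have "set As \<subseteq> {0}" using crit[OF setA] lenA n_def by simp
  moreover have "set (take n Ks) \<subseteq> set As" by (simp add: As_def)
  ultimately show "set (take (length Us) Ks) \<subseteq> {\<zero>\<^bsub>FR\<^esub>}" using n_def by simp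
qed

lemma Span_0: "0 \<in> EA.Span K Bs"
proof -
  have "\<zero>\<^bsub>FR\<^esub> \<in> EA.Span K Bs" by (rule EA.Span_subgroup_props(2)[OF subfield_K]) simp
  thus ?thesis by simp
qed

lemma Span_add: "x \<in> EA.Span K Bs \<Longrightarrow> y \<in> EA.Span K Bs \<Longrightarrow> x + y \<in> EA.Span K Bs"
proof -
  assume "x \<in> EA.Span K Bs" "y \<in> EA.Span K Bs"
  hence "x \<oplus>\<^bsub>FR\<^esub> y \<in> EA.Span K Bs" by (intro EA.Span_subgroup_props(3)[OF subfield_K]) simp_all
  thus ?thesis by simp
qed

lemma Span_neg: "x \<in> EA.Span K Bs \<Longrightarrow> - x \<in> EA.Span K Bs"
proof -
  assume "x \<in> EA.Span K Bs"
  hence "\<ominus>\<^bsub>FR\<^esub> x \<in> EA.Span K Bs" by (intro EA.Span_subgroup_props(4)[OF subfield_K]) simp_all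
  thus ?thesis by simp
qed

lemma Span_diff: "x \<in> EA.Span K Bs \<Longrightarrow> y \<in> EA.Span K Bs \<Longrightarrow> x - y \<in> EA.Span K Bs"
  using Span_add[of x Bs "- y"] Span_neg[of y Bs] by simp

lemma Span_mult: "c \<in> K \<Longrightarrow> x \<in> EA.Span K Bs \<Longrightarrow> c * x \<in> EA.Span K Bs"
proof -
  assume "c \<in> K" "x \<in> EA.Span K Bs"
  hence "c \<otimes>\<^bsub>FR\<^esub> x \<in> EA.Span K Bs" by (intro EA.Span_smult_closed[OF subfield_K]) simp_all
  thus ?thesis by simp
qed

lemma Span_sum: "(\<And>j. j < (n::nat) \<Longrightarrow> f j \<in> EA.Span K Bs) \<Longrightarrow> (\<Sum>j<n. f j) \<in> EA.Span K Bs"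
proof (induction n)
  case 0 then show ?case using Span_0 by simp
next
  case (Suc n)
  have "(\<Sum>j<n. f j) \<in> EA.Span K Bs" using Suc by simp
  moreover have "f n \<in> EA.Span K Bs" using Suc by simp
  ultimately show ?case using Span_add by simp
qed

lemma in_span_over: "x \<in> S \<Longrightarrow> x \<in> span_over K S"
  unfolding span_over_def using K_1 by (intro CollectI exI[of _ "{x}"] exI[of _ "\<lambda>_. 1"]) auto

lemma delta_sum: "j < (n::nat) \<Longrightarrow> (\<Sum>l<n. (if l = j then 1 else 0) * (f l :: 'a)) = f j"
proof -
  assume j: "j < n"
  have "(\<Sum>l<n. (if l = j then 1 else 0) * (f l :: 'a)) = (\<Sum>l<n. if l = j then f j else 0)"
    by (intro sum.cong) auto
  also have "\<dots> = f j" using j by (simp add: sum.delta)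
  finally show ?thesis .
qed

lemma rk_struct:
  fixes v :: "'n::finite \<Rightarrow> 'a"
  obtains ix M where "length ix = rk q v" "distinct ix" "EA.independent K (map v ix)"
   "\<And>i. set (M i) \<subseteq> K" "\<And>i. length (M i) = rk q v"
   "\<And>i. v i = (\<Sum>j<rk q v. M i ! j * v (ix ! j))"
   "\<And>j l. j < rk q v \<Longrightarrow> l < rk q v \<Longrightarrow> M (ix ! j) ! l = (if l = j then 1 else 0)"
   "span_over K (range v) = EA.Span K (map v ix)"
proof -
  obtain Ws where Ws: "EA.independent K Ws" "set Ws \<subseteq> range v"
    "EA.Span K Ws = span_over K (range v)" "rk q v = length Ws"
    using rk_basis by blast
  define s where "s = rk q v"
  define ix where "ix = map (\<lambda>u. SOME i. v i = u) Ws"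
  have mv: "map v ix = Ws"
    unfolding ix_def map_map
  proof (rule map_idI)
    fix u assume "u \<in> set Ws"
    hence "\<exists>i. v i = u" using Ws(2) by auto
    thus "(v \<circ> (\<lambda>u. SOME i. v i = u)) u = u" using someI_ex[of "\<lambda>i. v i = u"] by simp
  qed
  have len: "length ix = s" using Ws(4) s_def by (simp add: ix_def)
  have dist: "distinct ix" using EA.independent_distinct[OF subfield_K Ws(1)] mv
    by (metis distinct_map)
  have ex: "\<exists>Ks. set Ks \<subseteq> K \<and> length Ks = s \<and> v i = (\<Sum>j<s. Ks ! j * v (ix ! j))" for i
  proof -
    have "v i \<in> EA.Span K Ws" using Ws(3) in_span_over[of "v i" "range v"] by auto
    then obtain Ks where "set Ks \<subseteq> K" "length Ks = length Ws" "v i = (\<Sum>j<length Ws. Ks ! j * Ws ! j)"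
      unfolding Span_iff by blast
    moreover have "Ws ! j = v (ix ! j)" if "j < length Ws" for j
      using that mv len Ws(4) s_def by (metis nth_map)
    ultimately show ?thesis using Ws(4) s_def by (intro exI[of _ Ks]) auto
  qed
  define M where "M i = (SOME Ks. set Ks \<subseteq> K \<and> length Ks = s \<and> v i = (\<Sum>j<s. Ks ! j * v (ix ! j)))" for i
  have M: "set (M i) \<subseteq> K \<and> length (M i) = s \<and> v i = (\<Sum>j<s. M i ! j * v (ix ! j))" for i
    unfolding M_def by (rule someI_ex[OF ex])
  have Wsn: "Ws ! j = v (ix ! j)" if "j < s" for j
    using that mv len by (metis nth_map)
  have Md: "M (ix ! j) ! l = (if l = j then 1 else 0)" if j: "j < s" and l: "l < s" for j l
  proof -
    define D where "D = map (\<lambda>l. if l = j then 1 else (0::'a)) [0..<s]"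
    have sD: "set D \<subseteq> K" using K_0 K_1 by (auto simp: D_def)
    have lD: "length D = length Ws" using Ws(4) s_def by (simp add: D_def)
    have eqD: "(\<Sum>j'<length Ws. M (ix ! j) ! j' * Ws ! j') = (\<Sum>j'<length Ws. D ! j' * Ws ! j')"
    proof -
      have "(\<Sum>j'<length Ws. M (ix ! j) ! j' * Ws ! j') = v (ix ! j)"
        using M[of "ix ! j"] Wsn Ws(4) s_def by simp
      also have "\<dots> = (\<Sum>j'<s. (if j' = j then 1 else 0) * v (ix ! j'))"
        using delta_sum[OF j, of "\<lambda>l. v (ix ! l)"] by simp
      also have "\<dots> = (\<Sum>j'<length Ws. D ! j' * Ws ! j')"
        using Wsn Ws(4) s_def by (intro sum.cong) (auto simp: D_def)
      finally show ?thesis .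
    qed
    have sM: "set (M (ix ! j)) \<subseteq> K" using M by blast
    have lM: "length (M (ix ! j)) = length Ws" using M Ws(4) s_def by simp
    have "M (ix ! j) = D" by (rule indep_unique[OF Ws(1) sM lM sD lD eqD])
    thus ?thesis using l by (simp add: D_def)
  qed
  have ind: "EA.independent K (map v ix)" using Ws(1) mv by simp
  have sp: "span_over K (range v) = EA.Span K (map v ix)" using Ws(3) mv by simp
  have M1: "\<And>i. set (M i) \<subseteq> K" using M by blast
  have M2: "\<And>i. length (M i) = rk q v" using M s_def by blast
  have M3: "\<And>i. v i = (\<Sum>j<rk q v. M i ! j * v (ix ! j))" using M s_def by blast
  have M4: "\<And>j l. j < rk q v \<Longrightarrow> l < rk q v \<Longrightarrow> M (ix ! j) ! l = (if l = j then 1 else 0)"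
    using Md s_def by blast
  show ?thesis by (rule that[OF len[unfolded s_def] dist ind M1 M2 M3 M4 sp])
qed

end

definition Uset :: "'n list \<Rightarrow> ('n \<Rightarrow> 'a::field list) \<Rightarrow> nat \<Rightarrow> ('n \<Rightarrow> 'a) set" where
  "Uset ix M s = {u. \<forall>i. u i = (\<Sum>j<s. M i ! j * u (ix ! j))}"

lemma U_subspace: "vs.subspace (Uset ix M s)"
  unfolding vs.subspace_def Uset_def
proof (intro conjI ballI allI)
  show "0 \<in> {u. \<forall>i. u i = (\<Sum>j<s. M i ! j * u (ix ! j))}" by simp
next
  fix x y assume x: "x \<in> {u. \<forall>i. u i = (\<Sum>j<s. M i ! j * u (ix ! j))}"
    and y: "y \<in> {u. \<forall>i. u i = (\<Sum>j<s. M i ! j * u (ix ! j))}"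
  show "x + y \<in> {u. \<forall>i. u i = (\<Sum>j<s. M i ! j * u (ix ! j))}"
  proof (intro CollectI allI)
    fix i
    have xi: "x i = (\<Sum>j<s. M i ! j * x (ix ! j))" using x by blast
    have yi: "y i = (\<Sum>j<s. M i ! j * y (ix ! j))" using y by blast
    have "(x + y) i = x i + y i" by simp
    also have "\<dots> = (\<Sum>j<s. M i ! j * x (ix ! j)) + (\<Sum>j<s. M i ! j * y (ix ! j))"
      using xi yi by (rule arg_cong2[where f="(+)"])
    also have "\<dots> = (\<Sum>j<s. M i ! j * (x + y) (ix ! j))"
      by (simp add: sum.distrib distrib_left)
    finally show "(x + y) i = (\<Sum>j<s. M i ! j * (x + y) (ix ! j))" .
  qed
next
  fix c x assume x: "x \<in> {u. \<forall>i. u i = (\<Sum>j<s. M i ! j * u (ix ! j))}"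
  show "vsc c x \<in> {u. \<forall>i. u i = (\<Sum>j<s. M i ! j * u (ix ! j))}"
  proof (intro CollectI allI)
    fix i
    have xi: "x i = (\<Sum>j<s. M i ! j * x (ix ! j))" using x by blast
    have "vsc c x i = c * x i" by simp
    also have "\<dots> = c * (\<Sum>j<s. M i ! j * x (ix ! j))" using xi by (rule arg_cong)
    also have "\<dots> = (\<Sum>j<s. M i ! j * vsc c x (ix ! j))"
      by (simp add: sum_distrib_left mult_ac)
    finally show "vsc c x i = (\<Sum>j<s. M i ! j * vsc c x (ix ! j))" .
  qed
qed

lemma U_dim: "vs.dim (Uset ix M s :: ('n::finite \<Rightarrow> 'a::{field,finite}) set) \<le> s"
proof -
  define col where "col j = (\<lambda>i. M i ! j)" for j
  have "Uset ix M s \<subseteq> vs.span (col ` {..<s})"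
  proof
    fix u assume u: "u \<in> Uset ix M s"
    have "u = (\<Sum>j<s. vsc (u (ix ! j)) (col j))"
    proof
      fix i
      have ui: "u i = (\<Sum>j<s. M i ! j * u (ix ! j))" using u unfolding Uset_def by blast
      have "(\<Sum>j<s. vsc (u (ix ! j)) (col j)) i = (\<Sum>j<s. M i ! j * u (ix ! j))"
        by (simp add: sum_fun_app col_def mult.commute)
      thus "u i = (\<Sum>j<s. vsc (u (ix ! j)) (col j)) i" using ui by simp
    qed
    also have "\<dots> \<in> vs.span (col ` {..<s})"
      by (intro vs.span_sum vs.span_scale vs.span_base) auto
    finally show "u \<in> vs.span (col ` {..<s})" .
  qed
  hence "vs.dim (Uset ix M s) \<le> card (col ` {..<s})" by (rule vs.dim_le_card) auto
  also have "\<dots> \<le> s" using card_image_le[of "{..<s}" col] by simp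
  finally show ?thesis .
qed

context ffq begin

lemma U_frob:
  assumes M: "\<And>i. set (M i) \<subseteq> K" "\<And>i. length (M i) = s" and u: "u \<in> Uset ix M s"
  shows "frob_vec q u \<in> Uset ix M s"
  unfolding Uset_def
proof (intro CollectI allI)
  fix i
  have ui: "u i = (\<Sum>j<s. M i ! j * u (ix ! j))" using u unfolding Uset_def by blast
  have "frob_vec q u i = u i ^ q" by (simp add: frob_vec_def)
  also have "\<dots> = (\<Sum>j<s. M i ! j * u (ix ! j)) ^ q" using ui by (rule arg_cong)
  also have "\<dots> = (\<Sum>j<s. (M i ! j) ^ q * u (ix ! j) ^ q)"
    by (simp add: frob_sum power_mult_distrib)
  also have "\<dots> = (\<Sum>j<s. M i ! j * frob_vec q u (ix ! j))"
  proof (intro sum.cong refl)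
    fix j assume "j \<in> {..<s}"
    hence "M i ! j \<in> K" using M nth_mem by (metis lessThan_iff subsetD)
    thus "(M i ! j) ^ q * u (ix ! j) ^ q = M i ! j * frob_vec q u (ix ! j)"
      by (simp add: K_iff frob_vec_def)
  qed
  finally show "frob_vec q u i = (\<Sum>j<s. M i ! j * frob_vec q u (ix ! j))" .
qed

lemma cover:
  fixes A :: "('n::finite \<Rightarrow> 'a) set" and v :: "'n \<Rightarrow> 'a"
  assumes A: "vs.subspace A" and vA: "v \<in> A" and maxv: "\<And>u. u \<in> A \<Longrightarrow> rk q u \<le> rk q v"
    and kn: "CARD('n) \<le> m"
    and ixl: "length ix = rk q v" and ixd: "distinct ix" and ind: "EA.independent K (map v ix)"
    and M1: "\<And>i. set (M i) \<subseteq> K" and M2: "\<And>i. length (M i) = rk q v"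
    and M3: "\<And>i. v i = (\<Sum>j<rk q v. M i ! j * v (ix ! j))"
    and M4: "\<And>j l. j < rk q v \<Longrightarrow> l < rk q v \<Longrightarrow> M (ix ! j) ! l = (if l = j then 1 else 0)"
  shows "A \<subseteq> Uset ix M (rk q v)"
proof (rule ccontr)
  define s where "s = rk q v"
  assume "\<not> A \<subseteq> Uset ix M (rk q v)"
  then obtain w i0 where wA: "w \<in> A" and wi0: "w i0 \<noteq> (\<Sum>j<s. M i0 ! j * w (ix ! j))"
    unfolding Uset_def s_def by blast
  define z where "z = w i0 - (\<Sum>j<s. M i0 ! j * w (ix ! j))"
  have z0: "z \<noteq> 0" using wi0 by (simp add: z_def)
  have i0: "i0 \<notin> set ix"
  proof
    assume "i0 \<in> set ix"
    then obtain j0 where j0: "j0 < s" "i0 = ix ! j0" using ixl s_def by (auto simp: in_set_conv_nth)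
    have "(\<Sum>j<s. M i0 ! j * w (ix ! j)) = (\<Sum>j<s. (if j = j0 then 1 else 0) * w (ix ! j))"
      using j0 M4 s_def by (intro sum.cong) auto
    also have "\<dots> = w i0" using delta_sum[OF j0(1), of "\<lambda>j. w (ix ! j)"] j0 by simp
    finally show False using wi0 by simp
  qed
  have sm: "s + 1 \<le> m"
  proof -
    have "card (insert i0 (set ix)) = s + 1" using i0 ixd ixl s_def by (simp add: distinct_card)
    moreover have "card (insert i0 (set ix)) \<le> CARD('n)" by (rule card_mono) auto
    ultimately show ?thesis using kn by simp
  qed
  define e where "e j = v (ix ! j)" for j
  define LK where "LK = {a. set a \<subseteq> K \<and> length a = s}"
  define rep where "rep = replicate s (0::'a)"
  have repLK: "rep \<in> LK" using K_0 by (auto simp: LK_def rep_def set_replicate_conv_if)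
  have cLK: "card LK = q ^ s" unfolding LK_def using card_lists_length_eq[of K s] card_K K_def
    by simp
  have fLK: "finite LK" unfolding LK_def using finite_lists_length_eq[of K s] K_def by simp
  define g where "g = (\<lambda>(a, b). - (\<Sum>j<s. a ! j * e j) / ((\<Sum>j<s. a ! j * w (ix ! j)) + b * z))"
  define Bad where "Bad = insert 0 (g ` ((LK - {rep}) \<times> K))"
  have "card Bad \<le> Suc (card (g ` ((LK - {rep}) \<times> K)))" unfolding Bad_def by (rule card_insert_le_m1) auto
  also have "card (g ` ((LK - {rep}) \<times> K)) \<le> card ((LK - {rep}) \<times> K)"
    using fLK by (intro card_image_le finite_cartesian_product) auto
  also have "card ((LK - {rep}) \<times> K) = (q ^ s - 1) * q"
    using repLK cLK fLK card_K by (simp add: card_cartesian_product)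
  finally have cBad: "card Bad \<le> Suc ((q ^ s - 1) * q)" by simp
  have "Suc ((q ^ s - 1) * q) < q ^ s * q"
  proof -
    have Q: "1 \<le> q ^ s" using q_ge2 by simp
    have "(q ^ s - 1) * q = q ^ s * q - q" by (simp add: diff_mult_distrib)
    moreover have "q ^ s * q \<ge> q" using Q by simp
    ultimately show ?thesis using q_ge2 by linarith
  qed
  also have "q ^ s * q = q ^ (s + 1)" by simp
  also have "\<dots> \<le> q ^ m" using sm q_ge2 by (intro power_increasing) auto
  finally have "card Bad < card (UNIV :: 'a set)" using cBad card_F by simp
  then obtain lam where lam: "lam \<notin> Bad" by (metis UNIV_I card_mono finite not_le subsetI)
  have lam0: "lam \<noteq> 0" using lam by (simp add: Bad_def)
  define u where "u = v + vsc lam w"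
  have uA: "u \<in> A" unfolding u_def using A vA wA by (intro vs.subspace_add vs.subspace_scale) auto
  have ui: "u i = v i + lam * w i" for i by (simp add: u_def)
  define Us where "Us = map (\<lambda>j. u (ix ! j)) [0..<s] @ [lam * z]"
  have lUs: "length Us = Suc s" by (simp add: Us_def)
  have Usj: "Us ! j = u (ix ! j)" if "j < s" for j using that by (simp add: Us_def nth_append)
  have Uss: "Us ! s = lam * z" by (simp add: Us_def nth_append)
  have indUs: "EA.independent K Us"
  proof (rule indep_crit)
    fix As assume As: "set As \<subseteq> K" "length As = length Us" and s0: "(\<Sum>j<length Us. As ! j * Us ! j) = 0"
    define a where "a = take s As"
    have aj: "a ! j = As ! j" if "j < s" for j using that by (simp add: a_def)
    have aLK: "a \<in> LK" using As lUs by (auto simp: LK_def a_def dest: in_set_takeD)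
    have bK: "As ! s \<in> K" using As lUs by (metis lessI nth_mem subsetD)
    define E where "E = (\<Sum>j<s. a ! j * e j)"
    define D where "D = (\<Sum>j<s. a ! j * w (ix ! j)) + As ! s * z"
    have "(\<Sum>j<length Us. As ! j * Us ! j) = (\<Sum>j<s. As ! j * Us ! j) + As ! s * Us ! s"
      using lUs by simp
    also have "(\<Sum>j<s. As ! j * Us ! j) = (\<Sum>j<s. a ! j * e j + lam * (a ! j * w (ix ! j)))"
      using Usj aj by (intro sum.cong) (auto simp: ui e_def algebra_simps)
    also have "\<dots> = E + lam * (\<Sum>j<s. a ! j * w (ix ! j))"
      by (simp add: E_def sum.distrib sum_distrib_left)
    finally have ED: "E + lam * D = 0" using s0 Uss by (simp add: D_def algebra_simps)
    show "set As \<subseteq> {0}"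
    proof (cases "a = rep")
      case True
      hence "E = 0" by (simp add: E_def rep_def)
      hence "lam * (As ! s * z) = 0" using ED True by (simp add: D_def rep_def)
      hence b0: "As ! s = 0" using lam0 z0 by simp
      have "As ! j = 0" if "j < length As" for j
      proof (cases "j < s")
        case True thus ?thesis using aj \<open>a = rep\<close> by (metis nth_replicate rep_def)
      next
        case False thus ?thesis using that As(2) lUs b0 by (metis less_antisym)
      qed
      thus ?thesis by (auto simp: in_set_conv_nth)
    next
      case False
      have lmv: "length (map v ix) = s" using ixl s_def by simp
      have "E \<noteq> 0"
      proof
        assume E0: "E = 0"
        have "(\<Sum>j<length (map v ix). a ! j * map v ix ! j) = 0"
          using E0 lmv ixl s_def by (simp add: E_def e_def)
        hence "a = replicate (length (map v ix)) 0"
          using indep_zero[OF ind] aLK lmv by (simp add: LK_def)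
        thus False using False lmv by (simp add: rep_def)
      qed
      hence D0: "D \<noteq> 0" using ED by auto
      hence "lam = - E / D" using ED by (simp add: field_simps eq_neg_iff_add_eq_0)
      hence "lam = g (a, As ! s)" by (simp add: g_def E_def D_def)
      moreover have "(a, As ! s) \<in> (LK - {rep}) \<times> K" using aLK bK False by simp
      ultimately have "lam \<in> Bad" by (simp add: Bad_def)
      thus ?thesis using lam by simp
    qed
  qed
  obtain Bs where Bs: "set Bs = range u" "distinct Bs" using finite_distinct_list[of "range u"] by auto
  have spU: "span_over K (range u) = EA.Span K Bs" using span_list[OF Bs(2)] Bs(1) by simp
  have inR: "u i \<in> EA.Span K Bs" for i using in_span_over[of "u i" "range u"] spU by auto
  have "set Us \<subseteq> span_over K (range u)"
  proof -
    have "u (ix ! j) \<in> EA.Span K Bs" for j using inR by simp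
    moreover have "lam * z \<in> EA.Span K Bs"
    proof -
      have "u i0 - (\<Sum>j<s. M i0 ! j * u (ix ! j)) \<in> EA.Span K Bs"
      proof (intro Span_diff Span_sum Span_mult inR)
        fix j assume "j < s"
        thus "M i0 ! j \<in> K" using M1[of i0] M2[of i0] s_def by (metis nth_mem subsetD)
      qed
      moreover have "u i0 - (\<Sum>j<s. M i0 ! j * u (ix ! j)) =
          (v i0 - (\<Sum>j<s. M i0 ! j * v (ix ! j))) + lam * z"
        by (simp add: ui z_def sum.distrib algebra_simps sum_distrib_left)
      moreover have "v i0 - (\<Sum>j<s. M i0 ! j * v (ix ! j)) = 0" using M3[of i0] s_def by simp
      ultimately show ?thesis by simp
    qed
    ultimately show ?thesis using spU by (auto simp: Us_def)
  qed
  from rk_ge[OF indUs this] have "Suc s \<le> rk q u" using lUs by simp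
  moreover have "rk q u \<le> s" using maxv[OF uA] s_def by simp
  ultimately show False by simp
qed

lemma frobl_sum: "(sum (f :: _ \<Rightarrow> 'a) A) ^ (q ^ l) = sum (\<lambda>i. f i ^ (q ^ l)) A"
  using freshmans_dream_sum'[of "q ^ l" "e * l" f A] CHAR_eq p_prime q_def by (simp add: power_mult)

lemma moore:
  fixes v :: "'n::finite \<Rightarrow> 'a" and b :: "nat \<Rightarrow> 'a"
  assumes hb: "\<And>i. (\<Sum>l<rk q v. b l * v i ^ (q ^ l)) = 0" and l0: "l0 < rk q v"
  shows "b l0 = 0"
proof (rule ccontr)
  assume bl0: "b l0 \<noteq> 0"
  define s where "s = rk q v"
  obtain ix M where ixl: "length ix = rk q v" and ind: "EA.independent K (map v ix)"
    using rk_struct[of v] by metis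
  define e where "e j = v (ix ! j)" for j
  define P :: "'a poly" where "P = (\<Sum>l<s. monom (b l) (q ^ l))"
  have evP: "poly P x = (\<Sum>l<s. b l * x ^ (q ^ l))" for x by (simp add: P_def poly_sum poly_monom)
  have qinj: "q ^ l = q ^ l' \<longleftrightarrow> l = l'" for l l' using q_ge2 by (simp add: power_inject_exp)
  have "coeff P (q ^ l0) = (\<Sum>l<s. if l = l0 then b l else 0)"
    by (simp add: P_def coeff_sum qinj)
  also have "\<dots> = b l0" using l0 s_def by (simp add: sum.delta)
  finally have "P \<noteq> 0" using bl0 by auto
  have degP: "degree P \<le> q ^ (s - 1)"
    unfolding P_def
  proof (rule degree_sum_le)
    fix l assume "l \<in> {..<s}"
    hence "q ^ l \<le> q ^ (s - 1)" using q_ge2 by (intro power_increasing) auto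
    thus "degree (monom (b l) (q ^ l)) \<le> q ^ (s - 1)" using degree_monom_le order.trans by blast
  qed simp
  define LK where "LK = {a. set a \<subseteq> K \<and> length a = s}"
  have cLK: "card LK = q ^ s" unfolding LK_def using card_lists_length_eq[of K s] card_K by simp
  define cmb where "cmb a = (\<Sum>j<s. a ! j * e j)" for a
  have lmv: "length (map v ix) = s" using ixl s_def by simp
  have mvn: "map v ix ! j = e j" if "j < s" for j using that ixl s_def by (simp add: e_def)
  have "inj_on cmb LK"
  proof
    fix a a' assume a: "a \<in> LK" and a': "a' \<in> LK" and eq: "cmb a = cmb a'"
    have "(\<Sum>j<length (map v ix). a ! j * map v ix ! j) = (\<Sum>j<length (map v ix). a' ! j * map v ix ! j)"
      using eq mvn lmv by (simp add: cmb_def)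
    thus "a = a'" using indep_unique[OF ind] a a' lmv by (simp add: LK_def)
  qed
  hence ccmb: "card (cmb ` LK) = q ^ s" using cLK by (simp add: card_image)
  have "cmb ` LK \<subseteq> {x. poly P x = 0}"
  proof
    fix y assume "y \<in> cmb ` LK"
    then obtain a where a: "a \<in> LK" and y: "y = cmb a" by blast
    have aK: "a ! j \<in> K" if "j < s" for j using a that by (auto simp: LK_def)
    have "poly P y = (\<Sum>l<s. b l * (\<Sum>j<s. a ! j * e j) ^ (q ^ l))" by (simp add: evP y cmb_def)
    also have "\<dots> = (\<Sum>l<s. b l * (\<Sum>j<s. a ! j * e j ^ (q ^ l)))"
    proof (intro sum.cong refl arg_cong[where f="\<lambda>x. b _ * x"])
      fix l
      have "(\<Sum>j<s. a ! j * e j) ^ (q ^ l) = (\<Sum>j<s. (a ! j * e j) ^ (q ^ l))" by (rule frobl_sum)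
      also have "\<dots> = (\<Sum>j<s. a ! j * e j ^ (q ^ l))"
        using aK K_pow by (intro sum.cong) (auto simp: power_mult_distrib)
      finally show "(\<Sum>j<s. a ! j * e j) ^ (q ^ l) = (\<Sum>j<s. a ! j * e j ^ (q ^ l))" .
    qed
    also have "\<dots> = (\<Sum>l<s. \<Sum>j<s. a ! j * (b l * e j ^ (q ^ l)))"
      by (simp add: sum_distrib_left mult_ac)
    also have "\<dots> = (\<Sum>j<s. \<Sum>l<s. a ! j * (b l * e j ^ (q ^ l)))"
      by (rule sum.swap)
    also have "\<dots> = (\<Sum>j<s. a ! j * (\<Sum>l<s. b l * e j ^ (q ^ l)))"
      by (simp add: sum_distrib_left)
    also have "\<dots> = 0" using hb s_def by (simp add: e_def)
    finally show "y \<in> {x. poly P x = 0}" by simp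
  qed
  hence "card (cmb ` LK) \<le> card {x. poly P x = 0}" by (intro card_mono) auto
  also have "\<dots> \<le> degree P" by (rule card_poly_roots_bound[OF \<open>P \<noteq> 0\<close>])
  also have "\<dots> \<le> q ^ (s - 1)" by (rule degP)
  also have "\<dots> < q ^ s" using q_ge2 l0 s_def by (intro power_strict_increasing) auto
  finally show False using ccmb by simp
qed

lemma rk_le_dim_closed:
  fixes V :: "('n::finite \<Rightarrow> 'a) set"
  assumes V: "vs.subspace V" and fr: "\<And>x. x \<in> V \<Longrightarrow> frob_vec q x \<in> V" and vV: "v \<in> V"
  shows "rk q v \<le> vs.dim V"
proof -
  define s where "s = rk q v"
  define wv where "wv l = (\<lambda>i. v i ^ (q ^ l))" for l
  have wvV: "wv l \<in> V" for l
  proof (induction l)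
    case 0 then show ?case using vV by (simp add: wv_def)
  next
    case (Suc l)
    have "wv (Suc l) = frob_vec q (wv l)"
      by (simp add: wv_def frob_vec_def fun_eq_iff power_mult[symmetric] mult.commute)
    thus ?case using fr Suc by simp
  qed
  have inj: "inj_on wv {..<s}"
  proof
    fix l1 l2 assume l1: "l1 \<in> {..<s}" and l2: "l2 \<in> {..<s}" and eq: "wv l1 = wv l2"
    show "l1 = l2"
    proof (rule ccontr)
      assume ne: "l1 \<noteq> l2"
      define b where "b l = (if l = l1 then 1 else if l = l2 then -1 else (0::'a))" for l
      have "(\<Sum>l<rk q v. b l * v i ^ (q ^ l)) = 0" for i
      proof -
        have "(\<Sum>l<s. b l * v i ^ (q ^ l)) =
            (\<Sum>l<s. (if l = l1 then v i ^ (q ^ l1) else 0) - (if l = l2 then v i ^ (q ^ l2) else 0))"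
          using ne by (intro sum.cong) (auto simp: b_def)
        also have "\<dots> = v i ^ (q ^ l1) - v i ^ (q ^ l2)" using l1 l2
          by (simp add: sum_subtractf sum.delta)
        also have "\<dots> = 0" using eq by (simp add: wv_def fun_eq_iff)
        finally show ?thesis using s_def by simp
      qed
      hence "b l1 = 0" using moore l1 s_def by blast
      thus False by (simp add: b_def)
    qed
  qed
  have indep: "vs.independent (wv ` {..<s})"
  proof
    assume "vs.dependent (wv ` {..<s})"
    then obtain u where u: "\<exists>x\<in>wv ` {..<s}. u x \<noteq> 0" "(\<Sum>x\<in>wv ` {..<s}. vsc (u x) x) = 0"
      using vs.dependent_finite[of "wv ` {..<s}"] by auto
    have "(\<Sum>l<s. vsc (u (wv l)) (wv l)) = 0" using u(2) sum.reindex[OF inj, of "\<lambda>x. vsc (u x) x"] by simp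
    hence "(\<Sum>l<rk q v. u (wv l) * v i ^ (q ^ l)) = 0" for i
      using s_def by (simp add: fun_eq_iff sum_fun_app wv_def)
    hence "u (wv l) = 0" if "l < s" for l using moore[of "\<lambda>l. u (wv l)" v l] that s_def by blast
    thus False using u(1) by auto
  qed
  have "card (wv ` {..<s}) \<le> vs.dim V"
    using wvV indep by (intro fvs.independent_card_le_dim) auto
  thus ?thesis using card_image[OF inj] s_def by simp
qed

lemma maxrk_attained:
  fixes A :: "('n::finite \<Rightarrow> 'a) set"
  assumes A: "vs.subspace A"
  obtains v where "v \<in> A" "rk q v = maxrk q A" "\<And>u. u \<in> A \<Longrightarrow> rk q u \<le> rk q v"
proof -
  have ne: "rk q ` A \<noteq> {}" using vs.subspace_0[OF A] by auto
  have "maxrk q A \<in> rk q ` A" unfolding maxrk_def by (rule Max_in) (use ne in auto)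
  then obtain v where v: "v \<in> A" "rk q v = maxrk q A" by auto
  have "rk q u \<le> rk q v" if "u \<in> A" for u using that v unfolding maxrk_def by simp
  thus ?thesis using that v by blast
qed

lemma dim_le_maxrk:
  fixes A :: "('n::finite \<Rightarrow> 'a) set"
  assumes A: "vs.subspace A" and kn: "CARD('n) \<le> m"
  shows "vs.dim A \<le> maxrk q A \<and> (vs.dim A = maxrk q A \<longrightarrow> (\<forall>x\<in>A. frob_vec q x \<in> A))"
proof -
  obtain v where vA: "v \<in> A" and vm: "rk q v = maxrk q A" and mx: "\<And>u. u \<in> A \<Longrightarrow> rk q u \<le> rk q v"
    using maxrk_attained[OF A] by blast
  obtain ix M where ixl: "length ix = rk q v" and ixd: "distinct ix" and ind: "EA.independent K (map v ix)"
    and M1: "\<And>i. set (M i) \<subseteq> K" and M2: "\<And>i. length (M i) = rk q v"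
    and M3: "\<And>i. v i = (\<Sum>j<rk q v. M i ! j * v (ix ! j))"
    and M4: "\<And>j l. j < rk q v \<Longrightarrow> l < rk q v \<Longrightarrow> M (ix ! j) ! l = (if l = j then 1 else 0)"
    and "span_over K (range v) = EA.Span K (map v ix)"
    using rk_struct[of v] by blast
  have sub: "A \<subseteq> Uset ix M (rk q v)" by (rule cover[OF A vA mx kn ixl ixd ind M1 M2 M3 M4])
  have d1: "vs.dim A \<le> vs.dim (Uset ix M (rk q v))" using sub by (rule fvs.dim_subset)
  have d2: "vs.dim (Uset ix M (rk q v)) \<le> rk q v" by (rule U_dim)
  show ?thesis
  proof (intro conjI impI)
    show "vs.dim A \<le> maxrk q A" using d1 d2 vm by simp
  next
    assume eq: "vs.dim A = maxrk q A"
    have "A = Uset ix M (rk q v)"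
      using d1 d2 vm eq by (intro fvs.subspace_dim_equal[OF A U_subspace sub]) simp
    thus "\<forall>x\<in>A. frob_vec q x \<in> A" using U_frob[OF M1 M2] by auto
  qed
qed

lemma Lam_eq_AG:
  assumes kn: "CARD('n::finite) \<le> m"
  shows "Lam q = (AG q :: ('n \<Rightarrow> 'a) set set)"
proof (intro Set.set_eqI iffI)
  fix V :: "('n \<Rightarrow> 'a) set" assume "V \<in> Lam q"
  hence V: "vs.subspace V" and fr: "\<And>x. x \<in> V \<Longrightarrow> frob_vec q x \<in> V" by (auto simp: Lam_def)
  have "vs.dim V \<le> maxrk q V" using dim_le_maxrk[OF V kn] by simp
  moreover have "maxrk q V \<le> vs.dim V"
  proof -
    obtain v where "v \<in> V" "rk q v = maxrk q V" using maxrk_attained[OF V] by metis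
    thus ?thesis using rk_le_dim_closed[OF V fr] by metis
  qed
  ultimately show "V \<in> AG q" using V by (simp add: AG_def)
next
  fix A :: "('n \<Rightarrow> 'a) set" assume "A \<in> AG q"
  hence A: "vs.subspace A" and eq: "vs.dim A = maxrk q A" by (auto simp: AG_def)
  thus "A \<in> Lam q" using dim_le_maxrk[OF A kn] by (simp add: Lam_def)
qed

end

theorem corollary3p13:
  fixes q m k t r :: nat
    and C :: "('n::finite \<Rightarrow> 'a::{field,finite}) set"
  assumes q_pp: "\<exists>p e. prime p \<and> 0 < e \<and> q = p ^ e"
    and card_field: "CARD('a) = q ^ m"
    and k_ge: "1 \<le> k" and k_le: "k \<le> m"
    and card_idx: "CARD('n) = k"
    and C_sub: "vsubspace C"
    and C_nz: "C \<noteq> {0}"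
    and C_dim: "vdim C = t" and t_ge: "1 \<le> t" and t_le: "t \<le> k"
    and r_ge: "1 \<le> r" and r_le: "r \<le> t"
  shows "gen_rank_weight q C r = Min {vdim A | A. A \<in> AG q \<and> vdim (A \<inter> C) \<ge> r}"
proof -
  obtain p e where pe: "prime p" "0 < e" "q = p ^ e" using q_pp by blast
  interpret F: ffq q p e m "Fsub q :: 'a set"
    by unfold_locales (use pe card_field k_ge k_le in auto)
  have "Lam q = (AG q :: ('n \<Rightarrow> 'a) set set)"
    by (rule F.Lam_eq_AG) (use card_idx k_le in simp)
  thus ?thesis by (simp add: gen_rank_weight_def)
qed

end
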